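(* Let $R$ be a commutative ring and $A=(a_{ij})$, $B=(b_{jk})$ be $3\times 3$ matrices over $R$. Define, for $r=1,2,3$ and $s=6(r-1)$: $p_{s+1}=(a_{r2}+b_{12})(a_{r1}+b_{21})$, $p_{s+2}=(a_{r3}+b_{13})(a_{r1}+b_{31})$, $p_{s+3}=(a_{r3}+b_{23})(a_{r2}+b_{32})$, $p_{s+4}=a_{r1}(b_{11}-b_{12}-b_{13}-a_{r2}-a_{r3})$, $p_{s+5}=a_{r2}(b_{22}-b_{21}-b_{23}-a_{r1}-a_{r3})$, $p_{s+6}=a_{r3}(b_{33}-b_{31}-b_{32}-a_{r1}-a_{r2})$, and $p_{19}=b_{12}b_{21}$, $p_{20}=b_{13}b_{31}$, $p_{21}=b_{23}b_{32}$. Then for $r=1,2,3$ with $s=6(r-1)$, the $r$-th row of $AB$ equals $\big(p_{s+4}+p_{s+1}+p_{s+2}-p_{19}-p_{20},\; p_{s+5}+p_{s+1}+p_{s+3}-p_{19}-p_{21},\; p_{s+6}+p_{s+2}+p_{s+3}-p_{20}-p_{21}\big)$. In particular, the product of two $3\times 3$ matrices over a commutative ring can be computed using $21$ multiplications.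
   Context: "The product can be computed using $k$ multiplications" means: there are $k$ products, each a product of two linear forms with integer coefficients in the entries of $A$ and $B$, such that every entry of $AB$ is an integer linear combination of these $k$ products, identically for all inputs over any commutative ring; additions, subtractions and multiplications by integer constants are not counted. *)

theory Defs
  imports Main
begin

text \<open>3x3 matrices over a commutative ring are functions nat => nat => 'a,
  only the entries with indices in {1..3} being relevant.\<close>

definition mat_mult3 :: "(nat \<Rightarrow> nat \<Rightarrow> 'a::comm_ring_1) \<Rightarrow> (nat \<Rightarrow> nat \<Rightarrow> 'a) \<Rightarrow> nat \<Rightarrow> nat \<Rightarrow> 'a" where
  "mat_mult3 A B i k = (\<Sum>j\<in>{1..3}. A i j * B j k)"

definition pprod :: "(nat \<Rightarrow> nat \<Rightarrow> 'a::comm_ring_1) \<Rightarrow> (nat \<Rightarrow> nat \<Rightarrow> 'a) \<Rightarrow> nat \<Rightarrow> 'a" where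
  "pprod A B n =
    (if 1 \<le> n \<and> n \<le> 18 then
       (let r = (n - 1) div 6 + 1; q = (n - 1) mod 6 + 1 in
        if q = 1 then (A r 2 + B 1 2) * (A r 1 + B 2 1)
        else if q = 2 then (A r 3 + B 1 3) * (A r 1 + B 3 1)
        else if q = 3 then (A r 3 + B 2 3) * (A r 2 + B 3 2)
        else if q = 4 then A r 1 * (B 1 1 - B 1 2 - B 1 3 - A r 2 - A r 3)
        else if q = 5 then A r 2 * (B 2 2 - B 2 1 - B 2 3 - A r 1 - A r 3)
        else A r 3 * (B 3 3 - B 3 1 - B 3 2 - A r 1 - A r 2))
     else if n = 19 then B 1 2 * B 2 1
     else if n = 20 then B 1 3 * B 3 1
     else if n = 21 then B 2 3 * B 3 2
     else 0)"

text \<open>A linear form with integer coefficients in the entries of A and B: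
  w (False,i,j) is the coefficient of a_ij, w (True,i,j) that of b_ij.\<close>

definition linform :: "(bool \<times> nat \<times> nat \<Rightarrow> int) \<Rightarrow> (nat \<Rightarrow> nat \<Rightarrow> 'a::comm_ring_1) \<Rightarrow> (nat \<Rightarrow> nat \<Rightarrow> 'a) \<Rightarrow> 'a" where
  "linform w A B = (\<Sum>i\<in>{1..3}. \<Sum>j\<in>{1..3}.
      of_int (w (False, i, j)) * A i j + of_int (w (True, i, j)) * B i j)"

definition mult3_computable_with :: "'a::comm_ring_1 itself \<Rightarrow> nat \<Rightarrow> bool" where
  "mult3_computable_with (_ :: 'a itself) k \<longleftrightarrow>
    (\<exists>(u :: nat \<Rightarrow> bool \<times> nat \<times> nat \<Rightarrow> int) (v :: nat \<Rightarrow> bool \<times> nat \<times> nat \<Rightarrow> int)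
        (c :: nat \<Rightarrow> nat \<Rightarrow> nat \<Rightarrow> int).
      \<forall>(A :: nat \<Rightarrow> nat \<Rightarrow> 'a) B. \<forall>i\<in>{1..3}. \<forall>j\<in>{1..3}.
        mat_mult3 A B i j = (\<Sum>t<k. of_int (c i j t) * (linform (u t) A B * linform (v t) A B)))"

end

theory Submission
  imports Defs
begin

definition da :: "nat \<Rightarrow> nat \<Rightarrow> bool \<times> nat \<times> nat \<Rightarrow> int" where
  "da i j = (\<lambda>x. if x = (False,i,j) then 1 else 0)"
definition db :: "nat \<Rightarrow> nat \<Rightarrow> bool \<times> nat \<times> nat \<Rightarrow> int" where
  "db i j = (\<lambda>x. if x = (True,i,j) then 1 else 0)"
definition ladd (infixl "\<oplus>" 65) where "ladd w1 w2 = (\<lambda>x::bool \<times> nat \<times> nat. (w1 x + w2 x)::int)"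
definition lsub (infixl "\<ominus>" 65) where "lsub w1 w2 = (\<lambda>x::bool \<times> nat \<times> nat. (w1 x - w2 x)::int)"

lemma linform_add: "linform (w1 \<oplus> w2) A B = linform w1 A B + linform w2 A B"
  unfolding linform_def ladd_def by (simp add: sum.distrib[symmetric] algebra_simps)
lemma linform_sub: "linform (w1 \<ominus> w2) A B = linform w1 A B - linform w2 A B"
  unfolding linform_def lsub_def by (simp add: sum_subtractf[symmetric] algebra_simps)
lemma three: "{1..3::nat} = {1,2,3}" by auto
lemma linform_da: "i \<in> {1,2,3} \<Longrightarrow> j \<in> {1,2,3} \<Longrightarrow> linform (da i j) A B = A i j"
  unfolding linform_def da_def three by auto
lemma linform_db: "i \<in> {1,2,3} \<Longrightarrow> j \<in> {1,2,3} \<Longrightarrow> linform (db i j) A B = B i j"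
  unfolding linform_def db_def three by auto

definition uu :: "nat \<Rightarrow> bool \<times> nat \<times> nat \<Rightarrow> int" where
 "uu t = (if t<18 then (let r = t div 6 + 1; q = t mod 6 in
    if q=0 then da r 2 \<oplus> db 1 2 else if q=1 then da r 3 \<oplus> db 1 3 else if q=2 then da r 3 \<oplus> db 2 3
    else if q=3 then da r 1 else if q=4 then da r 2 else da r 3)
   else if t=18 then db 1 2 else if t=19 then db 1 3 else db 2 3)"
definition vv :: "nat \<Rightarrow> bool \<times> nat \<times> nat \<Rightarrow> int" where
 "vv t = (if t<18 then (let r = t div 6 + 1; q = t mod 6 in
    if q=0 then da r 1 \<oplus> db 2 1 else if q=1 then da r 1 \<oplus> db 3 1 else if q=2 then da r 2 \<oplus> db 3 2
    else if q=3 then db 1 1 \<ominus> db 1 2 \<ominus> db 1 3 \<ominus> da r 2 \<ominus> da r 3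
    else if q=4 then db 2 2 \<ominus> db 2 1 \<ominus> db 2 3 \<ominus> da r 1 \<ominus> da r 3
    else db 3 3 \<ominus> db 3 1 \<ominus> db 3 2 \<ominus> da r 1 \<ominus> da r 2)
   else if t=18 then db 2 1 else if t=19 then db 3 1 else db 3 2)"

lemma uv: "t < 21 \<Longrightarrow> linform (uu t) A B * linform (vv t) A B = pprod A B (t+1)"
proof -
  assume "t < 21"
  then have "t \<in> {0,1,2,3,4,5,6,7,8,9,10,11,12,13,14,15,16,17,18,19,20}" by (simp add: eval_nat_numeral less_Suc_eq)
  then show ?thesis
    by (auto simp: uu_def vv_def pprod_def Let_def linform_add linform_sub linform_da linform_db)
qed

definition cc :: "nat \<Rightarrow> nat \<Rightarrow> nat \<Rightarrow> int" where
 "cc i k t = (let s = 6*(i-1) in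
   if k = 1 then (if t = s+3 \<or> t = s \<or> t = s+1 then 1 else if t = 18 \<or> t = 19 then -1 else 0)
   else if k = 2 then (if t = s+4 \<or> t = s \<or> t = s+2 then 1 else if t = 18 \<or> t = 20 then -1 else 0)
   else (if t = s+5 \<or> t = s+1 \<or> t = s+2 then 1 else if t = 19 \<or> t = 20 then -1 else 0))"

lemma s2: "Suc (Suc 0) = 2" and s3: "Suc (Suc (Suc 0)) = 3" by simp_all

lemma part1:
  fixes A B :: "nat \<Rightarrow> nat \<Rightarrow> 'a::comm_ring_1"
  shows "(\<forall>r\<in>{1,2,3::nat}. let s = 6 * (r - 1); p = pprod A B in
            mat_mult3 A B r 1 = p (s+4) + p (s+1) + p (s+2) - p 19 - p 20 \<and>
            mat_mult3 A B r 2 = p (s+5) + p (s+1) + p (s+3) - p 19 - p 21 \<and>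
            mat_mult3 A B r 3 = p (s+6) + p (s+2) + p (s+3) - p 20 - p 21)"
  unfolding mat_mult3_def three by (simp add: pprod_def Let_def algebra_simps s2 s3)

lemma sum21: "(\<Sum>t<21. f t) = (\<Sum>t\<in>{0,1,2,3,4,5,6,7,8,9,10,11,12,13,14,15,16,17,18,19,20::nat}. f t)"
  by (rule sum.cong) (auto simp: eval_nat_numeral less_Suc_eq)

theorem mainTheorem3:
  fixes A B :: "nat \<Rightarrow> nat \<Rightarrow> 'a::comm_ring_1"
  shows "(\<forall>r\<in>{1,2,3::nat}. let s = 6 * (r - 1); p = pprod A B in
            mat_mult3 A B r 1 = p (s+4) + p (s+1) + p (s+2) - p 19 - p 20 \<and>
            mat_mult3 A B r 2 = p (s+5) + p (s+1) + p (s+3) - p 19 - p 21 \<and>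
            mat_mult3 A B r 3 = p (s+6) + p (s+2) + p (s+3) - p 20 - p 21)
         \<and> mult3_computable_with TYPE('a) 21"
proof
  show "(\<forall>r\<in>{1,2,3::nat}. let s = 6 * (r - 1); p = pprod A B in
            mat_mult3 A B r 1 = p (s+4) + p (s+1) + p (s+2) - p 19 - p 20 \<and>
            mat_mult3 A B r 2 = p (s+5) + p (s+1) + p (s+3) - p 19 - p 21 \<and>
            mat_mult3 A B r 3 = p (s+6) + p (s+2) + p (s+3) - p 20 - p 21)" by (rule part1)
  show "mult3_computable_with TYPE('a) 21"
    unfolding mult3_computable_with_def
  proof (intro exI allI ballI)
    fix A B :: "nat \<Rightarrow> nat \<Rightarrow> 'a" and i j :: nat
    assume i: "i \<in> {1..3}" and j: "j \<in> {1..3}"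
    have "(\<Sum>t<21. of_int (cc i j t) * (linform (uu t) A B * linform (vv t) A B))
        = (\<Sum>t<21. of_int (cc i j t) * pprod A B (t+1))"
      by (rule sum.cong) (auto simp: uv)
    also have "\<dots> = mat_mult3 A B i j"
      using i j part1[of A B] unfolding sum21 three
      by (auto simp: cc_def Let_def)
    finally show "mat_mult3 A B i j = (\<Sum>t<21. of_int (cc i j t) * (linform (uu t) A B * linform (vv t) A B))" by simp
  qed
qed

end
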